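(* Let $R$ be a nonempty set of permutations and let $f(x),g(x)$ be formal power series (or polynomials) with $g$ invertible such that $$\sum_{n\ge0}|\mathfrak S_n(1243,2143,R)|x^n=1+x\frac{f(x)}{g(x)}.$$ Then $$\sum_{n\ge0}|\mathfrak S_n(1243,2143,Rn)|x^n=1+x\frac{g(x)}{(1-x)g(x)-xf(x)}.$$
   Context: $\mathfrak S_n(S)$ denotes the permutations of $\{1,\dots,n\}$ avoiding every pattern in $S$ (no subsequence with the same relative order as a pattern). $Rn$ is the set obtained by appending to each $\sigma\in R$ of length $m$ the entry $m+1$. *)

theory Defs
  imports "HOL-Computational_Algebra.Formal_Power_Series"
begin

definition perms :: "nat \<Rightarrow> nat list set" where
  "perms n = {xs. distinct xs \<and> set xs = {1..n}}"

definition is_perm :: "nat list \<Rightarrow> bool" where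
  "is_perm xs \<longleftrightarrow> xs \<in> perms (length xs)"

definition order_iso :: "nat list \<Rightarrow> nat list \<Rightarrow> bool" where
  "order_iso a b \<longleftrightarrow> length a = length b \<and>
     (\<forall>i<length a. \<forall>j<length a. (a ! i < a ! j) = (b ! i < b ! j))"

definition contains :: "nat list \<Rightarrow> nat list \<Rightarrow> bool" where
  "contains \<sigma> p \<longleftrightarrow> (\<exists>I. I \<subseteq> {..<length \<sigma>} \<and> order_iso (nths \<sigma> I) p)"

definition Av :: "nat \<Rightarrow> nat list set \<Rightarrow> nat list set" where
  "Av n S = {\<sigma> \<in> perms n. \<forall>p\<in>S. \<not> contains \<sigma> p}"

definition append_max :: "nat list set \<Rightarrow> nat list set" where
  "append_max R = (\<lambda>\<sigma>. \<sigma> @ [length \<sigma> + 1]) ` R"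

definition Av_gf :: "nat list set \<Rightarrow> 'a::field fps" where
  "Av_gf S = Abs_fps (\<lambda>n. of_nat (card (Av n S)))"

end

theory Submission
  imports Defs "HOL-Library.Sublist"
begin

lemma nths_restrict: "nths xs I = nths xs (I \<inter> {..<length xs})"
  unfolding nths_def
  by (rule arg_cong[where f="map fst"], rule filter_cong) (auto simp: set_zip)

lemma contains_iff: "contains \<sigma> p \<longleftrightarrow> (\<exists>q. subseq q \<sigma> \<and> order_iso q p)"
  unfolding contains_def
proof
  assume "\<exists>I. I \<subseteq> {..<length \<sigma>} \<and> order_iso (nths \<sigma> I) p"
  then show "\<exists>q. subseq q \<sigma> \<and> order_iso q p"
    using subseq_conv_nths by blast
next
  assume "\<exists>q. subseq q \<sigma> \<and> order_iso q p"
  then obtain q I where "q = nths \<sigma> I" "order_iso q p" using subseq_conv_nths by blast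
  then show "\<exists>I. I \<subseteq> {..<length \<sigma>} \<and> order_iso (nths \<sigma> I) p"
    by (intro exI[of _ "I \<inter> {..<length \<sigma>}"]) (auto simp: nths_restrict[symmetric])
qed

lemma contains_subseq: "subseq \<sigma> \<tau> \<Longrightarrow> contains \<sigma> p \<Longrightarrow> contains \<tau> p"
  unfolding contains_iff using subseq_order.order_trans by blast

lemma subseq_map_inv: "subseq q (map \<phi> xs) \<Longrightarrow> \<exists>q0. subseq q0 xs \<and> q = map \<phi> q0"
proof (induction xs arbitrary: q)
  case Nil
  then show ?case by auto
next
  case (Cons x xs)
  show ?case
  proof (cases q)
    case Nil
    then show ?thesis by (intro exI[of _ "[]"]) auto
  next
    case (Cons y q')
    show ?thesis
    proof (cases "y = \<phi> x")
      case True
      with Cons.prems Cons have "subseq q' (map \<phi> xs)" by simp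
      then obtain q0 where "subseq q0 xs" "q' = map \<phi> q0" using Cons.IH by blast
      then show ?thesis using Cons True by (intro exI[of _ "x # q0"]) auto
    next
      case False
      with Cons.prems Cons have "subseq q (map \<phi> xs)" by simp
      then obtain q0 where "subseq q0 xs" "q = map \<phi> q0" using Cons.IH by blast
      then show ?thesis by (intro exI[of _ q0]) auto
    qed
  qed
qed

lemma smo_less_iff:
  fixes \<phi> :: "nat \<Rightarrow> nat"
  assumes "strict_mono_on A \<phi>" "x \<in> A" "y \<in> A"
  shows "(\<phi> x < \<phi> y) = (x < y)"
proof -
  have 1: "x < y \<Longrightarrow> \<phi> x < \<phi> y" and 2: "y < x \<Longrightarrow> \<phi> y < \<phi> x"
    using assms by (auto simp: strict_mono_on_def)
  show ?thesis using 1 2 by (cases "x < y"; cases "y < x") auto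
qed

lemma subseq_set: "subseq xs ys \<Longrightarrow> set xs \<subseteq> set ys"
proof
  fix x assume a: "subseq xs ys" "x \<in> set xs"
  obtain y where "y \<in> set ys" "x = y" by (rule list_emb_set[OF a])
  then show "x \<in> set ys" by simp
qed

lemma smo_subset: "strict_mono_on A \<phi> \<Longrightarrow> B \<subseteq> A \<Longrightarrow> strict_mono_on B \<phi>"
  by (auto simp: strict_mono_on_def)

lemma order_iso_map:
  fixes \<phi> :: "nat \<Rightarrow> nat"
  assumes "strict_mono_on (set q) \<phi>"
  shows "order_iso (map \<phi> q) p \<longleftrightarrow> order_iso q p"
proof -
  have "(\<phi> (q!i) < \<phi> (q!j)) = (q!i < q!j)" if "i < length q" "j < length q" for i j
    using smo_less_iff[OF assms] that by simp
  then show ?thesis unfolding order_iso_def by auto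
qed

lemma contains_map:
  fixes \<phi> :: "nat \<Rightarrow> nat"
  assumes "strict_mono_on (set \<sigma>) \<phi>"
  shows "contains (map \<phi> \<sigma>) p \<longleftrightarrow> contains \<sigma> p"
proof
  assume "contains (map \<phi> \<sigma>) p"
  then obtain q where q: "subseq q (map \<phi> \<sigma>)" "order_iso q p" unfolding contains_iff by blast
  then obtain q0 where q0: "subseq q0 \<sigma>" "q = map \<phi> q0" using subseq_map_inv by blast
  have "strict_mono_on (set q0) \<phi>" by (rule smo_subset[OF assms subseq_set[OF q0(1)]])
  then show "contains \<sigma> p" using q q0 order_iso_map unfolding contains_iff by blast
next
  assume "contains \<sigma> p"
  then obtain q where q: "subseq q \<sigma>" "order_iso q p" unfolding contains_iff by blast
  have "strict_mono_on (set q) \<phi>" by (rule smo_subset[OF assms subseq_set[OF q(1)]])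
  then show "contains (map \<phi> \<sigma>) p" using q order_iso_map subseq_map unfolding contains_iff by blast
qed

unbundle fps_syntax

lemma fps_part:
  fixes a b :: "nat \<Rightarrow> nat" and f g :: "'a::field_char_0 fps"
  assumes a0: "a 0 = 1" and b0: "b 0 = 1"
    and rec: "\<And>n. b (Suc n) = b n + (\<Sum>i=1..n. a i * b (Suc n - i))"
    and g0: "g$0 \<noteq> 0" and hA: "Abs_fps (\<lambda>n. of_nat (a n)) = 1 + fps_X * f / g"
  shows "Abs_fps (\<lambda>n. (of_nat (b n) :: 'a)) = 1 + fps_X * g / ((1 - fps_X) * g - fps_X * f)"
proof -
  define A :: "'a fps" where "A = Abs_fps (\<lambda>n. of_nat (a n))"
  define B :: "'a fps" where "B = Abs_fps (\<lambda>n. of_nat (b n))"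
  define E :: "'a fps" where "E = Abs_fps (\<lambda>n. of_nat (b (Suc n)))"
  define C where "C = 1 - fps_X - (A - 1)"
  have BE: "B = 1 + fps_X * E"
    by (rule fps_ext) (auto simp: B_def E_def b0)
  have AE: "((A - 1) * E) $ n = (\<Sum>i=1..n. of_nat (a i) * of_nat (b (Suc n - i)))" for n
  proof -
    have "((A - 1) * E) $ n = (\<Sum>i=0..n. (A - 1)$i * E$(n - i))" by (rule fps_mult_nth)
    also have "\<dots> = (\<Sum>i=1..n. (A - 1)$i * E$(n - i))"
      by (subst sum.atLeast_Suc_atMost) (auto simp: A_def a0)
    also have "\<dots> = (\<Sum>i=1..n. of_nat (a i) * of_nat (b (Suc n - i)))"
      by (rule sum.cong) (auto simp: A_def E_def Suc_diff_le)
    finally show ?thesis .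
  qed
  have E_eq: "E = 1 + fps_X * E + (A - 1) * E"
  proof (rule fps_ext)
    fix n
    have "E $ n = of_nat (b n) + (\<Sum>i=1..n. of_nat (a i) * of_nat (b (Suc n - i)))"
      unfolding E_def by (simp add: rec)
    also have "of_nat (b n) = (1 + fps_X * E) $ n"
      using arg_cong[OF BE, of "\<lambda>F. F $ n"] by (simp add: B_def)
    finally show "E $ n = (1 + fps_X * E + (A - 1) * E) $ n" using AE by simp
  qed
  have EC: "E * C = 1"
  proof -
    have "E * C = E - fps_X * E - (A - 1) * E" unfolding C_def by (simp add: algebra_simps)
    also have "\<dots> = 1" using E_eq by (simp add: algebra_simps)
    finally show ?thesis .
  qed
  have invC: "inverse C = E" using EC by (intro fps_inverse_unique) (simp add: mult.commute)
  have C0: "C $ 0 \<noteq> 0" using EC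
    by (metis fps_mult_nth_0 fps_one_nth mult_zero_right zero_neq_one)
  have gfg: "g * (fps_X * f / g) = fps_X * f"
    using g0 by (simp add: fps_divide_unit inverse_mult_eq_1' mult.commute mult.left_commute)
  have den: "(1 - fps_X) * g - fps_X * f = g * C"
  proof -
    have "g * C = g - fps_X * g - g * (A - 1)" unfolding C_def by (simp add: algebra_simps)
    also have "g * (A - 1) = fps_X * f" using hA gfg by (simp add: A_def)
    finally show ?thesis by (simp add: algebra_simps)
  qed
  have gC0: "(g * C) $ 0 \<noteq> 0" using g0 C0 by simp
  have "fps_X * g / ((1 - fps_X) * g - fps_X * f) = fps_X * g * (inverse g * inverse C)"
    unfolding den using gC0 by (simp add: fps_divide_unit fps_inverse_mult)
  also have "\<dots> = fps_X * E * (g * inverse g)" by (simp add: invC algebra_simps)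
  also have "\<dots> = fps_X * E" using g0 by (simp add: inverse_mult_eq_1')
  finally show ?thesis using BE by (simp add: B_def)
qed

unbundle no fps_syntax

lemma subseq_snoc_notin:
  assumes "subseq (q @ [z]) (xs @ ys)" "z \<notin> set ys"
  shows "subseq (q @ [z]) xs"
proof -
  obtain a b where ab: "q @ [z] = a @ b" "subseq a xs" "subseq b ys"
    using assms(1) by (auto elim: subseq_appendE)
  show ?thesis
  proof (cases "b = []")
    case True then show ?thesis using ab by simp
  next
    case False
    have "last (a @ b) = z" using ab(1) by (metis last_snoc)
    then have "last b = z" using False by simp
    then have "z \<in> set b" using False last_in_set by blast
    then have "z \<in> set ys" using subseq_set[OF ab(3)] by blast
    then show ?thesis using assms(2) by simp
  qed
qed

lemma subseq_snoc_neq: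
  "subseq (q @ [z]) (xs @ [y]) \<Longrightarrow> z \<noteq> y \<Longrightarrow> subseq (q @ [z]) xs"
  using subseq_snoc_notin[of q z xs "[y]"] by simp

lemma subseq_snoc_drop:
  assumes "subseq (q @ [z]) (xs @ [y])"
  shows "subseq q xs"
proof -
  obtain a b where ab: "q @ [z] = a @ b" "subseq a xs" "subseq b [y]"
    using assms(1) by (auto elim: subseq_appendE)
  show ?thesis
  proof (cases b)
    case Nil
    then have "subseq (q @ [z]) xs" using ab by simp
    moreover have "subseq q (q @ [z])" by (rule subseq_rev_drop_many) simp
    ultimately show ?thesis using subseq_order.order_trans by blast
  next
    case (Cons c cs)
    then have "cs = []" using ab(3) by (cases "c = y") auto
    then have "q = a" using ab(1) Cons by simp
    then show ?thesis using ab by simp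
  qed
qed

lemma subseq_filter_all:
  "subseq q xs \<Longrightarrow> \<forall>x\<in>set q. P x \<Longrightarrow> subseq q (filter P xs)"
  using subseq_filter[of q xs P] by simp

lemma two_elems:
  "x \<in> set xs \<Longrightarrow> y \<in> set xs \<Longrightarrow> x \<noteq> y \<Longrightarrow> subseq [x, y] xs \<or> subseq [y, x] xs"
  by (induction xs) (auto simp: subseq_singleton_left)

lemma all4: "(\<forall>i<(4::nat). P i) \<longleftrightarrow> P 0 \<and> P 1 \<and> P 2 \<and> P 3"
proof -
  have "i < 4 \<longleftrightarrow> i = 0 \<or> i = 1 \<or> i = 2 \<or> i = (3::nat)" for i by auto
  then show ?thesis by auto
qed

lemma iso_1243_4: "order_iso [w,x,y,z] [1,2,4,3] \<longleftrightarrow> w < x \<and> x < z \<and> z < y"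
  unfolding order_iso_def by (simp add: All_less_Suc2) linarith

lemma iso_2143_4: "order_iso [w,x,y,z] [2,1,4,3] \<longleftrightarrow> x < w \<and> w < z \<and> z < y"
  unfolding order_iso_def by (simp add: All_less_Suc2) linarith

lemma order_iso_length: "order_iso q p \<Longrightarrow> length q = length p"
  by (simp add: order_iso_def)

lemma list4: "length q = 4 \<Longrightarrow> \<exists>w x y z. q = [w,x,y,z]"
  by (simp add: length_Suc_conv numeral_eq_Suc) blast


definition Pat :: "nat list set" where "Pat = {[1,2,4,3],[2,1,4,3]}"

definition avoids :: "nat list \<Rightarrow> nat list set \<Rightarrow> bool" where
  "avoids \<sigma> S \<longleftrightarrow> (\<forall>p\<in>S. \<not> contains \<sigma> p)"

lemma Av_alt: "Av n S = {\<sigma> \<in> perms n. avoids \<sigma> S}"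
  by (simp add: Av_def avoids_def)

lemma avoids_Un: "avoids \<sigma> (A \<union> B) \<longleftrightarrow> avoids \<sigma> A \<and> avoids \<sigma> B"
  by (auto simp: avoids_def)

lemma avoids_subseq: "subseq \<sigma> \<tau> \<Longrightarrow> avoids \<tau> S \<Longrightarrow> avoids \<sigma> S"
  unfolding avoids_def using contains_subseq by blast

lemma avoids_map:
  fixes \<phi> :: "nat \<Rightarrow> nat"
  shows "strict_mono_on (set \<sigma>) \<phi> \<Longrightarrow> avoids (map \<phi> \<sigma>) S \<longleftrightarrow> avoids \<sigma> S"
  unfolding avoids_def using contains_map by blast

definition occP :: "nat list \<Rightarrow> bool" where
  "occP \<sigma> \<longleftrightarrow> (\<exists>w x y z. subseq [w,x,y,z] \<sigma> \<and> x \<noteq> w \<and> w < z \<and> x < z \<and> z < y)"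

lemma avoids_Pat: "avoids \<sigma> Pat \<longleftrightarrow> \<not> occP \<sigma>"
proof
  assume a: "avoids \<sigma> Pat"
  show "\<not> occP \<sigma>"
  proof
    assume "occP \<sigma>"
    then obtain w x y z where o: "subseq [w,x,y,z] \<sigma>" "x \<noteq> w" "w < z" "x < z" "z < y"
      unfolding occP_def by blast
    show False
    proof (cases "w < x")
      case True
      then have "order_iso [w,x,y,z] [1,2,4,3]" using o iso_1243_4[of w x y z] by simp
      then have "contains \<sigma> [1,2,4,3]" using o(1) contains_iff by blast
      then show False using a by (simp add: avoids_def Pat_def)
    next
      case False
      then have "order_iso [w,x,y,z] [2,1,4,3]" using o iso_2143_4[of w x y z] by simp
      then have "contains \<sigma> [2,1,4,3]" using o(1) contains_iff by blast
      then show False using a by (simp add: avoids_def Pat_def)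
    qed
  qed
next
  assume a: "\<not> occP \<sigma>"
  show "avoids \<sigma> Pat" unfolding avoids_def Pat_def
  proof (intro ballI notI)
    fix p assume p: "p \<in> {[1,2,4,3],[2,1,4,3]}" and c: "contains \<sigma> p"
    then obtain q where q: "subseq q \<sigma>" "order_iso q p" using contains_iff by blast
    then have "length q = 4" using p order_iso_length by fastforce
    then obtain w x y z where qq: "q = [w,x,y,z]" using list4 by blast
    from p show False
    proof
      assume "p = [1,2,4,3]"
      then have "w < x \<and> x < z \<and> z < y" using q qq iso_1243_4 by simp
      then have "occP \<sigma>" unfolding occP_def using q qq
        by (intro exI[of _ w] exI[of _ x] exI[of _ y] exI[of _ z]) auto
      then show False using a by simp
    next
      assume "p \<in> {[2,1,4,3]}"
      then have "x < w \<and> w < z \<and> z < y" using q qq iso_2143_4 by simp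
      then have "occP \<sigma>" unfolding occP_def using q qq
        by (intro exI[of _ w] exI[of _ x] exI[of _ y] exI[of _ z]) auto
      then show False using a by simp
    qed
  qed
qed

lemma order_iso_snoc_max:
  assumes "\<forall>x\<in>set \<tau>. x \<le> length \<tau>"
  shows "order_iso q (\<tau> @ [length \<tau> + 1]) \<longleftrightarrow>
           (\<exists>q' v. q = q' @ [v] \<and> order_iso q' \<tau> \<and> (\<forall>x\<in>set q'. x < v))"
proof
  assume H: "order_iso q (\<tau> @ [length \<tau> + 1])"
  then have lq: "length q = Suc (length \<tau>)" by (simp add: order_iso_def)
  then have "q \<noteq> []" by auto
  then obtain q' v where qv: "q = q' @ [v]" by (metis append_butlast_last_id)
  then have lq': "length q' = length \<tau>" using lq by simp
  have H': "((q' @ [v]) ! i < (q' @ [v]) ! j) = ((\<tau> @ [length \<tau> + 1]) ! i < (\<tau> @ [length \<tau> + 1]) ! j)"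
    if "i < Suc (length \<tau>)" "j < Suc (length \<tau>)" for i j
  proof -
    have H0: "\<And>i j. i < length q \<Longrightarrow> j < length q \<Longrightarrow>
      (q!i < q!j) = ((\<tau> @ [length \<tau> + 1]) ! i < (\<tau> @ [length \<tau> + 1]) ! j)"
      using H unfolding order_iso_def by blast
    show ?thesis using H0[of i j] qv that lq by simp
  qed
  have "order_iso q' \<tau>" unfolding order_iso_def
  proof (intro conjI allI impI)
    show "length q' = length \<tau>" by (rule lq')
    fix i j assume "i < length q'" "j < length q'"
    then show "(q' ! i < q' ! j) = (\<tau> ! i < \<tau> ! j)"
      using H'[of i j] lq' by (simp add: nth_append)
  qed
  moreover have "\<forall>x\<in>set q'. x < v"
  proof
    fix x assume "x \<in> set q'"
    then obtain i where i: "i < length q'" "x = q' ! i" by (auto simp: in_set_conv_nth)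
    have "\<tau> ! i \<le> length \<tau>" using assms i lq' by auto
    then show "x < v" using H'[of i "length \<tau>"] i lq' by (simp add: nth_append)
  qed
  ultimately show "\<exists>q' v. q = q' @ [v] \<and> order_iso q' \<tau> \<and> (\<forall>x\<in>set q'. x < v)"
    using qv by blast
next
  assume "\<exists>q' v. q = q' @ [v] \<and> order_iso q' \<tau> \<and> (\<forall>x\<in>set q'. x < v)"
  then obtain q' v where qv: "q = q' @ [v]" "order_iso q' \<tau>" "\<forall>x\<in>set q'. x < v" by blast
  have lq': "length q' = length \<tau>" using qv(2) by (simp add: order_iso_def)
  show "order_iso q (\<tau> @ [length \<tau> + 1])" unfolding order_iso_def
  proof (intro conjI allI impI)
    show "length q = length (\<tau> @ [length \<tau> + 1])" using qv lq' by simp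
    fix i j assume ij: "i < length q" "j < length q"
    have ti: "\<tau> ! i \<le> length \<tau>" if "i < length \<tau>" for i using assms that by auto
    have qi: "q' ! i < v" if "i < length q'" for i using qv(3) that by auto
    have iso: "(q' ! i < q' ! j) = (\<tau> ! i < \<tau> ! j)" if "i < length q'" "j < length q'" for i j
      using qv(2) that by (simp add: order_iso_def)
    show "(q ! i < q ! j) = ((\<tau> @ [length \<tau> + 1]) ! i < (\<tau> @ [length \<tau> + 1]) ! j)"
    proof (cases "i < length \<tau>"; cases "j < length \<tau>")
      assume "i < length \<tau>" "j < length \<tau>"
      then show ?thesis using iso[of i j] lq' qv(1) by (simp add: nth_append)
    next
      assume a: "i < length \<tau>" "\<not> j < length \<tau>"
      then have "j = length \<tau>" using ij qv(1) lq' by simp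
      then show ?thesis using a qi[of i] ti[of i] lq' qv(1) by (simp add: nth_append)
    next
      assume a: "\<not> i < length \<tau>" "j < length \<tau>"
      then have "i = length \<tau>" using ij qv(1) lq' by simp
      then show ?thesis using a qi[of j] ti[of j] lq' qv(1) by (simp add: nth_append)
    next
      assume a: "\<not> i < length \<tau>" "\<not> j < length \<tau>"
      then have "i = length \<tau>" "j = length \<tau>" using ij qv(1) lq' by simp_all
      then show ?thesis using lq' qv(1) by (simp add: nth_append)
    qed
  qed
qed

definition occR :: "nat list set \<Rightarrow> nat list \<Rightarrow> bool" where
  "occR R \<sigma> \<longleftrightarrow> (\<exists>\<tau>\<in>R. \<exists>q v. subseq (q @ [v]) \<sigma> \<and> order_iso q \<tau> \<and> (\<forall>x\<in>set q. x < v))"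

lemma is_perm_bound: "is_perm \<tau> \<Longrightarrow> \<forall>x\<in>set \<tau>. x \<le> length \<tau>"
  by (auto simp: is_perm_def perms_def)

lemma avoids_Rn:
  assumes "\<forall>\<tau>\<in>R. is_perm \<tau>"
  shows "avoids \<sigma> (append_max R) \<longleftrightarrow> \<not> occR R \<sigma>"
proof -
  have eq: "contains \<sigma> (\<tau> @ [length \<tau> + 1]) \<longleftrightarrow>
          (\<exists>q v. subseq (q @ [v]) \<sigma> \<and> order_iso q \<tau> \<and> (\<forall>x\<in>set q. x < v))" if "\<tau> \<in> R" for \<tau>
  proof -
    have b: "\<forall>x\<in>set \<tau>. x \<le> length \<tau>" using is_perm_bound assms that by blast
    show ?thesis
    proof
      assume "contains \<sigma> (\<tau> @ [length \<tau> + 1])"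
      then obtain q where q: "subseq q \<sigma>" "order_iso q (\<tau> @ [length \<tau> + 1])"
        unfolding contains_iff by blast
      then obtain q' v where "q = q' @ [v]" "order_iso q' \<tau>" "\<forall>x\<in>set q'. x < v"
        using order_iso_snoc_max[OF b] by blast
      then show "\<exists>q v. subseq (q @ [v]) \<sigma> \<and> order_iso q \<tau> \<and> (\<forall>x\<in>set q. x < v)"
        using q by blast
    next
      assume "\<exists>q v. subseq (q @ [v]) \<sigma> \<and> order_iso q \<tau> \<and> (\<forall>x\<in>set q. x < v)"
      then obtain q v where q: "subseq (q @ [v]) \<sigma>" "order_iso q \<tau>" "\<forall>x\<in>set q. x < v" by blast
      then have "order_iso (q @ [v]) (\<tau> @ [length \<tau> + 1])"
        using order_iso_snoc_max[OF b] by blast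
      then show "contains \<sigma> (\<tau> @ [length \<tau> + 1])" using q(1) unfolding contains_iff by blast
    qed
  qed
  show ?thesis
  proof
    assume a: "avoids \<sigma> (append_max R)"
    show "\<not> occR R \<sigma>"
    proof
      assume "occR R \<sigma>"
      then obtain \<tau> q v where t: "\<tau> \<in> R" "subseq (q @ [v]) \<sigma>" "order_iso q \<tau>" "\<forall>x\<in>set q. x < v"
        unfolding occR_def by blast
      then have "contains \<sigma> (\<tau> @ [length \<tau> + 1])" using eq by blast
      moreover have "\<tau> @ [length \<tau> + 1] \<in> append_max R" using t(1) unfolding append_max_def by blast
      ultimately show False using a unfolding avoids_def by blast
    qed
  next
    assume a: "\<not> occR R \<sigma>"
    show "avoids \<sigma> (append_max R)" unfolding avoids_def append_max_def
    proof (intro ballI notI)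
      fix p assume "p \<in> (\<lambda>\<sigma>. \<sigma> @ [length \<sigma> + 1]) ` R" "contains \<sigma> p"
      then obtain \<tau> where t: "\<tau> \<in> R" "contains \<sigma> (\<tau> @ [length \<tau> + 1])" by blast
      then have "\<exists>q v. subseq (q @ [v]) \<sigma> \<and> order_iso q \<tau> \<and> (\<forall>x\<in>set q. x < v)" using eq by blast
      then show False using a t(1) unfolding occR_def by blast
    qed
  qed
qed

lemma perm_of_distinct:
  assumes "distinct xs" "set xs \<subseteq> {1..n}" "length xs = n"
  shows "xs \<in> perms n"
proof -
  have "card (set xs) = n" using assms by (simp add: distinct_card)
  then have "set xs = {1..n}" using card_subset_eq[of "{1..n}" "set xs"] assms(2) by simp
  then show ?thesis using assms(1) by (simp add: perms_def)
qed

lemma perms_length: "xs \<in> perms n \<Longrightarrow> length xs = n"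
proof -
  assume "xs \<in> perms n"
  then have "distinct xs" "set xs = {1..n}" by (auto simp: perms_def)
  then show ?thesis using distinct_card[of xs] by simp
qed

lemma filter_single: "distinct xs \<Longrightarrow> a \<in> set xs \<Longrightarrow> filter (\<lambda>x. x = a) xs = [a]"
  by (induction xs) (auto simp: filter_empty_conv)

definition hf :: "nat \<Rightarrow> nat \<Rightarrow> nat \<Rightarrow> nat" where "hf r M j = (if j = 1 then r else M + j - 1)"
definition hi :: "nat \<Rightarrow> nat \<Rightarrow> nat" where "hi M v = (if v \<le> M then 1 else v - M + 1)"
definition gmap :: "nat \<Rightarrow> nat \<Rightarrow> nat list \<times> nat list \<Rightarrow> nat list" where
  "gmap N k x = map (hf (hd (snd x)) (N - k)) (fst x) @ [N] @ tl (snd x)"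
definition Fmap :: "nat \<Rightarrow> nat \<Rightarrow> nat list \<Rightarrow> nat list \<times> nat list" where
  "Fmap N k \<sigma> = (map (hi (N - k)) (take k \<sigma>), filter (\<lambda>v. v \<le> N - k) \<sigma>)"

lemma g_side:
  assumes Rp: "\<forall>\<tau>\<in>R. is_perm \<tau>" and k1: "1 \<le> k" and kN: "k < N"
    and \<alpha>A: "\<alpha> \<in> Av k (Pat \<union> R)" and \<rho>A: "\<rho> \<in> Av (N - k) (Pat \<union> append_max R)"
  shows "gmap N k (\<alpha>, \<rho>) \<in> Av N (Pat \<union> append_max R) \<and> gmap N k (\<alpha>, \<rho>) ! k = N
         \<and> Fmap N k (gmap N k (\<alpha>, \<rho>)) = (\<alpha>, \<rho>)"
proof -
  define M where "M = N - k"
  have M1: "1 \<le> M" and NM: "N = M + k" using k1 kN by (auto simp: M_def)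
  from \<alpha>A have \<alpha>p: "distinct \<alpha>" "set \<alpha> = {1..k}" and \<alpha>av: "avoids \<alpha> (Pat \<union> R)"
    by (auto simp: Av_alt perms_def)
  have l\<alpha>: "length \<alpha> = k" using \<alpha>A perms_length by (auto simp: Av_alt)
  from \<rho>A have \<rho>p: "distinct \<rho>" "set \<rho> = {1..M}" and \<rho>av: "avoids \<rho> (Pat \<union> append_max R)"
    by (auto simp: Av_alt perms_def M_def)
  have l\<rho>: "length \<rho> = M" using \<rho>A perms_length by (auto simp: Av_alt M_def)
  have "\<rho> \<noteq> []" using l\<rho> M1 by auto
  then obtain r \<beta> where \<rho>eq: "\<rho> = r # \<beta>" by (cases \<rho>) auto
  have rM: "1 \<le> r" "r \<le> M" using \<rho>p \<rho>eq by auto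
  have \<beta>M: "\<forall>b\<in>set \<beta>. 1 \<le> b \<and> b \<le> M" using \<rho>p \<rho>eq by auto
  have r\<beta>: "r \<notin> set \<beta>" "distinct \<beta>" using \<rho>p \<rho>eq by auto
  have l\<beta>: "length \<beta> = M - 1" using l\<rho> \<rho>eq by simp
  define h where "h = hf r M"
  have h_mono: "strict_mono_on {1..k} h"
  proof (rule strict_mono_onI)
    fix i j assume "i \<in> {1..k}" "j \<in> {1..k}" "i < j"
    then show "h i < h j" using rM by (cases "i = 1") (auto simp: h_def hf_def)
  qed
  have h_mono': "strict_mono_on (set \<alpha>) h" using h_mono \<alpha>p by simp
  define \<alpha>v where "\<alpha>v = map h \<alpha>"
  have g_eq: "gmap N k (\<alpha>, \<rho>) = \<alpha>v @ [N] @ \<beta>"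
    by (simp add: gmap_def \<alpha>v_def h_def M_def \<rho>eq)
  have \<alpha>v_small: "\<forall>x\<in>set \<alpha>v. x \<le> M \<longrightarrow> x = r"
  proof
    fix x assume "x \<in> set \<alpha>v"
    then obtain j where j: "j \<in> set \<alpha>" "x = h j" by (auto simp: \<alpha>v_def)
    then have "1 \<le> j" using \<alpha>p by auto
    then show "x \<le> M \<longrightarrow> x = r" using j(2) by (cases "j = 1") (auto simp: h_def hf_def)
  qed
  have \<alpha>v_range: "\<forall>x\<in>set \<alpha>v. 1 \<le> x \<and> x < N"
  proof
    fix x assume "x \<in> set \<alpha>v"
    then obtain j where j: "j \<in> set \<alpha>" "x = h j" by (auto simp: \<alpha>v_def)
    then have "1 \<le> j" "j \<le> k" using \<alpha>p by auto
    then show "1 \<le> x \<and> x < N" using j(2) rM NM by (cases "j = 1") (auto simp: h_def hf_def)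
  qed
  have \<alpha>v_dist: "distinct \<alpha>v"
    unfolding \<alpha>v_def using \<alpha>p(1) strict_mono_on_imp_inj_on[OF h_mono'] by (simp add: distinct_map)
  have dist: "distinct (\<alpha>v @ [N] @ \<beta>)"
  proof -
    have "N \<notin> set \<alpha>v" using \<alpha>v_range by auto
    moreover have "N \<notin> set \<beta>" using \<beta>M NM k1 by auto
    moreover have "set \<alpha>v \<inter> set \<beta> = {}" using \<alpha>v_small \<beta>M r\<beta> by auto
    ultimately show ?thesis using \<alpha>v_dist r\<beta> by auto
  qed
  have len: "length (\<alpha>v @ [N] @ \<beta>) = N" using l\<alpha> l\<beta> NM M1 by (simp add: \<alpha>v_def)
  have set\<sigma>: "set (\<alpha>v @ [N] @ \<beta>) \<subseteq> {1..N}" 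
  proof
    fix x assume "x \<in> set (\<alpha>v @ [N] @ \<beta>)"
    then have "x \<in> set \<alpha>v \<or> x = N \<or> x \<in> set \<beta>" by auto
    then show "x \<in> {1..N}" using \<alpha>v_range \<beta>M NM M1 by fastforce
  qed
  have perm: "\<alpha>v @ [N] @ \<beta> \<in> perms N" using perm_of_distinct dist set\<sigma> len by blast
  have filt: "filter (\<lambda>v. v \<le> M) (\<alpha>v @ [N] @ \<beta>) = \<rho>"
  proof -
    have "filter (\<lambda>v. v \<le> M) \<alpha>v = map h (filter (\<lambda>j. h j \<le> M) \<alpha>)"
      unfolding \<alpha>v_def by (simp add: filter_map o_def)
    also have "filter (\<lambda>j. h j \<le> M) \<alpha> = filter (\<lambda>j. j = 1) \<alpha>"
      by (rule filter_cong) (use \<alpha>p rM in \<open>auto simp: h_def hf_def\<close>)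
    also have "\<dots> = [1]" using filter_single[of \<alpha> 1] \<alpha>p k1 by simp
    finally have f1: "filter (\<lambda>v. v \<le> M) \<alpha>v = [r]" by (simp add: h_def hf_def)
    have f2: "filter (\<lambda>v. v \<le> M) [N] = []" using NM k1 by simp
    have f3: "filter (\<lambda>v. v \<le> M) \<beta> = \<beta>" using \<beta>M by simp
    have "\<not> N \<le> M" using NM k1 by simp
    then show ?thesis using f1 f3 \<rho>eq by simp
  qed
  have \<alpha>v_av: "avoids \<alpha>v (Pat \<union> R)" using \<alpha>av avoids_map[OF h_mono'] unfolding \<alpha>v_def by blast
  have \<rho>_nP: "\<not> occP \<rho>" using \<rho>av avoids_Pat avoids_Un by blast
  have \<rho>_nR: "\<not> occR R \<rho>" using \<rho>av avoids_Rn[OF Rp] avoids_Un by blast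
  have \<alpha>v_nP: "\<not> occP \<alpha>v" using \<alpha>v_av avoids_Pat avoids_Un by blast
  have \<alpha>v_nR: "avoids \<alpha>v R" using \<alpha>v_av avoids_Un by blast
  have to_\<rho>: "subseq q \<rho>" if "subseq q (\<alpha>v @ [N] @ \<beta>)" "\<forall>x\<in>set q. x \<le> M" for q
    using subseq_filter_all[OF that] filt by simp
  have nP: "\<not> occP (\<alpha>v @ [N] @ \<beta>)"
  proof
    assume "occP (\<alpha>v @ [N] @ \<beta>)"
    then obtain w x y z where o: "subseq [w,x,y,z] (\<alpha>v @ [N] @ \<beta>)" "x \<noteq> w" "w < z" "x < z" "z < y"
      unfolding occP_def by blast
    have yN: "y \<le> N" using subseq_set[OF o(1)] set\<sigma> by auto
    show False
    proof (cases "z \<le> M")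
      case zM: True
      show False
      proof (cases "y \<le> M")
        case True
        have "\<forall>u\<in>set [w,x,y,z]. u \<le> M" using o zM True by auto
        then have "subseq [w,x,y,z] \<rho>" using to_\<rho>[OF o(1)] by blast
        then have "occP \<rho>" using o unfolding occP_def
          by (intro exI[of _ w] exI[of _ x] exI[of _ y] exI[of _ z]) simp
        then show False using \<rho>_nP by blast
      next
        case False
        have "subseq [w,x,y] [w,x,y,z]" by simp
        then have "subseq [w,x,y] (\<alpha>v @ [N] @ \<beta>)"
          by (rule subseq_order.order_trans[OF _ o(1)])
        then have s3: "subseq ([w,x] @ [y]) ((\<alpha>v @ [N]) @ \<beta>)" by simp
        have "y \<notin> set \<beta>" using False \<beta>M by auto
        then have "subseq ([w,x] @ [y]) (\<alpha>v @ [N])" using subseq_snoc_notin[OF s3] by blast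
        then have "subseq [w,x] \<alpha>v" by (rule subseq_snoc_drop)
        then have "set [w,x] \<subseteq> set \<alpha>v" by (rule subseq_set)
        then have "w \<in> set \<alpha>v" "x \<in> set \<alpha>v" by auto
        moreover have "w \<le> M" "x \<le> M" using o zM by auto
        ultimately have "w = r" "x = r" using \<alpha>v_small by auto
        then show False using o(2) by simp
      qed
    next
      case False
      have s4: "subseq ([w,x,y] @ [z]) ((\<alpha>v @ [N]) @ \<beta>)" using o(1) by simp
      have "z \<notin> set \<beta>" using False \<beta>M by auto
      then have "subseq ([w,x,y] @ [z]) (\<alpha>v @ [N])" using subseq_snoc_notin[OF s4] by blast
      moreover have "z \<noteq> N" using o yN by auto
      ultimately have "subseq ([w,x,y] @ [z]) \<alpha>v" by (rule subseq_snoc_neq)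
      then have "occP \<alpha>v" using o unfolding occP_def
        by (intro exI[of _ w] exI[of _ x] exI[of _ y] exI[of _ z]) simp
      then show False using \<alpha>v_nP by blast
    qed
  qed
  have nR: "\<not> occR R (\<alpha>v @ [N] @ \<beta>)"
  proof
    assume "occR R (\<alpha>v @ [N] @ \<beta>)"
    then obtain \<tau> q v where o: "\<tau> \<in> R" "subseq (q @ [v]) (\<alpha>v @ [N] @ \<beta>)" "order_iso q \<tau>"
      "\<forall>x\<in>set q. x < v"
      unfolding occR_def by blast
    show False
    proof (cases "v \<le> M")
      case True
      then have "\<forall>x\<in>set (q @ [v]). x \<le> M" using o(4) by auto
      then have "subseq (q @ [v]) \<rho>" using to_\<rho>[OF o(2)] by blast
      then have "occR R \<rho>" using o unfolding occR_def by blast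
      then show False using \<rho>_nR by blast
    next
      case False
      have s: "subseq (q @ [v]) ((\<alpha>v @ [N]) @ \<beta>)" using o(2) by simp
      have "v \<notin> set \<beta>" using False \<beta>M by auto
      then have "subseq (q @ [v]) (\<alpha>v @ [N])" using subseq_snoc_notin[OF s] by blast
      then have "subseq q \<alpha>v" by (rule subseq_snoc_drop)
      then have "contains \<alpha>v \<tau>" using o(3) contains_iff by blast
      then show False using \<alpha>v_nR o(1) unfolding avoids_def by blast
    qed
  qed
  have av: "avoids (\<alpha>v @ [N] @ \<beta>) (Pat \<union> append_max R)"
    using nP nR avoids_Pat avoids_Rn[OF Rp] avoids_Un by blast
  have nth: "(\<alpha>v @ [N] @ \<beta>) ! k = N" using l\<alpha> by (simp add: \<alpha>v_def nth_append)
  have F: "Fmap N k (\<alpha>v @ [N] @ \<beta>) = (\<alpha>, \<rho>)"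
  proof -
    have t: "take k (\<alpha>v @ [N] @ \<beta>) = \<alpha>v" using l\<alpha> by (simp add: \<alpha>v_def)
    have m: "map (hi M) \<alpha>v = \<alpha>"
      unfolding \<alpha>v_def map_map
      by (rule map_idI) (use \<alpha>p rM in \<open>auto simp: h_def hf_def hi_def\<close>)
    show ?thesis unfolding Fmap_def M_def[symmetric] t m filt by simp
  qed
  show ?thesis using g_eq perm av nth F by (simp add: Av_alt)
qed

lemma F_side:
  assumes Rp: "\<forall>\<tau>\<in>R. is_perm \<tau>" and k1: "1 \<le> k" and kN: "k < N"
    and \<sigma>A: "\<sigma> \<in> Av N (Pat \<union> append_max R)" and \<sigma>k: "\<sigma> ! k = N"
  shows "Fmap N k \<sigma> \<in> Av k (Pat \<union> R) \<times> Av (N - k) (Pat \<union> append_max R)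
         \<and> gmap N k (Fmap N k \<sigma>) = \<sigma>"
proof -
  define M where "M = N - k"
  have NM: "N = M + k" "1 \<le> M" using kN by (auto simp: M_def)
  from \<sigma>A have \<sigma>p: "distinct \<sigma>" "set \<sigma> = {1..N}" and \<sigma>av: "avoids \<sigma> (Pat \<union> append_max R)"
    by (auto simp: Av_alt perms_def)
  have l\<sigma>: "length \<sigma> = N" using \<sigma>A perms_length by (auto simp: Av_alt)
  define \<alpha> where "\<alpha> = take k \<sigma>"
  define \<beta> where "\<beta> = drop (Suc k) \<sigma>"
  have \<sigma>eq: "\<sigma> = \<alpha> @ [N] @ \<beta>"
    using id_take_nth_drop[of k \<sigma>] l\<sigma> kN \<sigma>k by (simp add: \<alpha>_def \<beta>_def)
  have l\<alpha>: "length \<alpha> = k" using l\<sigma> kN by (simp add: \<alpha>_def)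
  have l\<beta>: "length \<beta> = M - 1" using l\<sigma> NM by (simp add: \<beta>_def)
  have d: "distinct (\<alpha> @ [N] @ \<beta>)" using \<sigma>p(1) \<sigma>eq by simp
  then have dist: "distinct \<alpha>" "distinct \<beta>" "N \<notin> set \<alpha>" "N \<notin> set \<beta>" "set \<alpha> \<inter> set \<beta> = {}"
    by auto
  have "set (\<alpha> @ [N] @ \<beta>) = {1..N}" using \<sigma>p(2) \<sigma>eq by simp
  then have sets: "set \<alpha> \<union> {N} \<union> set \<beta> = {1..N}" by auto
  have \<alpha>ne: "\<alpha> \<noteq> []" using l\<alpha> k1 by auto
  define m where "m = Min (set \<alpha>)"
  have m\<alpha>: "m \<in> set \<alpha>" using \<alpha>ne by (simp add: m_def)
  have mmin: "\<forall>a\<in>set \<alpha>. m \<le> a" by (simp add: m_def)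
  have \<sigma>nP: "\<not> occP \<sigma>" using \<sigma>av avoids_Pat avoids_Un by blast
  have \<sigma>nR: "\<not> occR R \<sigma>" using \<sigma>av avoids_Rn[OF Rp] avoids_Un by blast
  have inN: "x \<in> {1..N}" if "x \<in> set \<alpha> \<or> x \<in> set \<beta>" for x using that sets by blast
  have K1: "b < a" if ab: "a \<in> set \<alpha>" "b \<in> set \<beta>" "a \<noteq> m" for a b
  proof (rule ccontr)
    assume "\<not> b < a"
    moreover have "a \<noteq> b" using dist ab by auto
    ultimately have ab': "a < b" by simp
    have ma: "m < a" using mmin ab by (metis le_neq_implies_less)
    have bN: "b < N" using inN[of b] ab dist by fastforce
    have sb: "subseq ([N] @ [b]) ([N] @ \<beta>)" using ab(2) by (simp add: subseq_singleton_left)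
    have "subseq [m, a] \<alpha> \<or> subseq [a, m] \<alpha>" using two_elems[OF m\<alpha> ab(1)] ab(3) by auto
    then show False
    proof
      assume "subseq [m, a] \<alpha>"
      then have "subseq ([m, a] @ [N] @ [b]) (\<alpha> @ [N] @ \<beta>)" using sb list_emb_append_mono by blast
      then have "occP \<sigma>" unfolding occP_def \<sigma>eq[symmetric] using ma ab' bN
        by (intro exI[of _ m] exI[of _ a] exI[of _ N] exI[of _ b]) simp
      then show False using \<sigma>nP by blast
    next
      assume "subseq [a, m] \<alpha>"
      then have "subseq ([a, m] @ [N] @ [b]) (\<alpha> @ [N] @ \<beta>)" using sb list_emb_append_mono by blast
      then have "occP \<sigma>" unfolding occP_def \<sigma>eq[symmetric] using ma ab' bN
        by (intro exI[of _ a] exI[of _ m] exI[of _ N] exI[of _ b]) simp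
      then show False using \<sigma>nP by blast
    qed
  qed
  define L where "L = insert m (set \<beta>)"
  define U where "U = (set \<alpha> - {m}) \<union> {N}"
  have m\<beta>: "m \<notin> set \<beta>" using m\<alpha> dist by auto
  have Lcard: "card L = M"
    using m\<beta> distinct_card[OF dist(2)] l\<beta> NM by (simp add: L_def)
  have LU: "l < u" if "l \<in> L" "u \<in> U" for l u
  proof -
    have lN: "l < N" using that inN[of l] m\<alpha> dist by (auto simp: L_def)
    show ?thesis
    proof (cases "u = N")
      case True then show ?thesis using lN by simp
    next
      case False
      then have u: "u \<in> set \<alpha>" "u \<noteq> m" using that(2) by (auto simp: U_def)
      show ?thesis
      proof (cases "l = m")
        case True then show ?thesis using u mmin by (metis le_neq_implies_less)
      next
        case False
        then have "l \<in> set \<beta>" using that(1) by (simp add: L_def)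
        then show ?thesis using K1 u by blast
      qed
    qed
  qed
  have cover: "{1..N} = L \<union> U" using sets m\<alpha> by (auto simp: L_def U_def)
  have Lle: "l \<le> M" if l: "l \<in> L" for l
  proof -
    have "{1..l} \<subseteq> L"
    proof
      fix x assume x: "x \<in> {1..l}"
      have "l \<in> {1..N}" using l cover by blast
      then have "x \<in> {1..N}" using x by auto
      then have "x \<in> L \<or> x \<in> U" using cover by blast
      moreover have "x \<notin> U" using LU[OF l] x by fastforce
      ultimately show "x \<in> L" by blast
    qed
    then have "card {1..l} \<le> card L" by (intro card_mono) (auto simp: L_def)
    then show ?thesis using Lcard by simp
  qed
  have L: "L = {1..M}"
  proof -
    have "L \<subseteq> {1..M}"
    proof
      fix l assume l: "l \<in> L"
      then have "l \<in> {1..N}" using cover by blast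
      then show "l \<in> {1..M}" using Lle[OF l] by auto
    qed
    then show ?thesis using card_subset_eq[of "{1..M}" L] Lcard by simp
  qed
  have mM: "m \<le> M" using L by (auto simp: L_def)
  have \<beta>M: "\<forall>b\<in>set \<beta>. 1 \<le> b \<and> b \<le> M" using L by (auto simp: L_def)
  have \<alpha>big: "M < a \<and> a < N" if a: "a \<in> set \<alpha>" "a \<noteq> m" for a
  proof -
    have "a \<notin> L" using a dist by (auto simp: L_def)
    moreover have "a \<in> {1..N}" using inN a by blast
    moreover have "a \<noteq> N" using a dist by auto
    ultimately show ?thesis using L by auto
  qed
  have hi_mono: "strict_mono_on (set \<alpha>) (hi M)"
  proof (rule strict_mono_onI)
    fix r s assume rs: "r \<in> set \<alpha>" "s \<in> set \<alpha>" "r < s"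
    have "s \<noteq> m" using rs mmin by (metis leD)
    then have sM: "M < s" using \<alpha>big rs by blast
    show "hi M r < hi M s"
    proof (cases "r = m")
      case True then show ?thesis using mM sM by (simp add: hi_def)
    next
      case False then have "M < r" using \<alpha>big rs by blast
      then show ?thesis using sM rs by (simp add: hi_def)
    qed
  qed
  define \<alpha>' where "\<alpha>' = map (hi M) \<alpha>"
  have \<alpha>'perm: "\<alpha>' \<in> perms k"
  proof (rule perm_of_distinct)
    show "distinct \<alpha>'" unfolding \<alpha>'_def
      using dist(1) strict_mono_on_imp_inj_on[OF hi_mono] by (simp add: distinct_map)
    show "length \<alpha>' = k" using l\<alpha> by (simp add: \<alpha>'_def)
    show "set \<alpha>' \<subseteq> {1..k}"
    proof
      fix x assume "x \<in> set \<alpha>'"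
      then obtain a where a: "a \<in> set \<alpha>" "x = hi M a" by (auto simp: \<alpha>'_def)
      show "x \<in> {1..k}"
      proof (cases "a = m")
        case True then show ?thesis using a mM k1 by (simp add: hi_def)
      next
        case False then have "M < a \<and> a < N" using \<alpha>big a by blast
        then show ?thesis using a NM by (simp add: hi_def, arith)
      qed
    qed
  qed
  have sub\<alpha>: "subseq \<alpha> \<sigma>" unfolding \<sigma>eq by (rule subseq_rev_drop_many) simp
  have \<alpha>avP: "avoids \<alpha> Pat" using avoids_subseq[OF sub\<alpha>] \<sigma>av avoids_Un by blast
  have \<alpha>avR: "avoids \<alpha> R" unfolding avoids_def
  proof (intro ballI notI)
    fix \<tau> assume t: "\<tau> \<in> R" "contains \<alpha> \<tau>"
    then obtain q where q: "subseq q \<alpha>" "order_iso q \<tau>" unfolding contains_iff by blast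
    have "subseq (q @ [N]) (\<alpha> @ [N])" using q(1) by simp
    then have s: "subseq (q @ [N]) \<sigma>" unfolding \<sigma>eq
      using subseq_rev_drop_many[of "q @ [N]" "\<alpha> @ [N]" \<beta>] by simp
    have "\<forall>x\<in>set q. x < N"
    proof
      fix x assume "x \<in> set q"
      then have "x \<in> set \<alpha>" using subseq_set[OF q(1)] by blast
      then show "x < N" using inN[of x] dist by fastforce
    qed
    then have "occR R \<sigma>" unfolding occR_def using t(1) s q(2) by blast
    then show False using \<sigma>nR by blast
  qed
  have \<alpha>'av: "avoids \<alpha>' (Pat \<union> R)"
    unfolding \<alpha>'_def avoids_map[OF hi_mono] avoids_Un using \<alpha>avP \<alpha>avR by blast
  define \<rho> where "\<rho> = filter (\<lambda>v. v \<le> M) \<sigma>"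
  have \<rho>eq: "\<rho> = m # \<beta>"
  proof -
    have eqv: "(v \<le> M) = (v = m)" if "v \<in> set \<alpha>" for v
      using \<alpha>big[OF that] mM by (cases "v = m") auto
    have "filter (\<lambda>v. v \<le> M) \<alpha> = filter (\<lambda>v. v = m) \<alpha>"
      by (rule filter_cong[OF refl]) (rule eqv)
    also have "\<dots> = [m]" using filter_single[OF dist(1) m\<alpha>] .
    finally have f1: "filter (\<lambda>v. v \<le> M) \<alpha> = [m]" .
    have f3: "filter (\<lambda>v. v \<le> M) \<beta> = \<beta>" using \<beta>M by simp
    have "\<not> N \<le> M" using NM k1 by simp
    then show ?thesis unfolding \<rho>_def using f1 f3 \<sigma>eq by simp
  qed
  have \<rho>perm: "\<rho> \<in> perms M"
    unfolding perms_def using \<rho>eq m\<beta> dist(2) L by (simp add: L_def)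
  have \<rho>av: "avoids \<rho> (Pat \<union> append_max R)"
    using avoids_subseq[of \<rho> \<sigma>] \<sigma>av by (simp add: \<rho>_def)
  have Feq: "Fmap N k \<sigma> = (\<alpha>', \<rho>)" by (simp add: Fmap_def \<alpha>'_def \<rho>_def \<alpha>_def M_def)
  have bk: "map (hf m M) \<alpha>' = \<alpha>"
    unfolding \<alpha>'_def map_map
  proof (rule map_idI)
    fix a assume a: "a \<in> set \<alpha>"
    show "(hf m M \<circ> hi M) a = a"
    proof (cases "a = m")
      case True then show ?thesis using mM by (simp add: hi_def hf_def)
    next
      case False then have "M < a" using \<alpha>big a by blast
      then show ?thesis by (simp add: hi_def hf_def)
    qed
  qed
  have "gmap N k (\<alpha>', \<rho>) = \<sigma>"
    using bk \<sigma>eq by (simp add: gmap_def \<rho>eq M_def[symmetric])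
  then show ?thesis using Feq \<alpha>'perm \<alpha>'av \<rho>perm \<rho>av by (simp add: Av_alt M_def)
qed

lemma finite_perms: "finite (perms n)"
proof -
  have "perms n \<subseteq> {xs. set xs \<subseteq> {1..n} \<and> length xs = n}"
    using perms_length by (auto simp: perms_def)
  then show ?thesis using finite_lists_length_eq[of "{1..n}" n] finite_subset by blast
qed

lemma finite_Av: "finite (Av n S)"
  using finite_perms[of n] by (rule finite_subset[rotated]) (auto simp: Av_def)

lemma bij_k:
  assumes Rp: "\<forall>\<tau>\<in>R. is_perm \<tau>" and k1: "1 \<le> k" and kN: "k < N"
  shows "bij_betw (gmap N k) (Av k (Pat \<union> R) \<times> Av (N - k) (Pat \<union> append_max R))
           {\<sigma> \<in> Av N (Pat \<union> append_max R). \<sigma> ! k = N}"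
proof (rule bij_betw_byWitness[where f' = "Fmap N k"])
  show "\<forall>a\<in>Av k (Pat \<union> R) \<times> Av (N - k) (Pat \<union> append_max R). Fmap N k (gmap N k a) = a"
    using g_side[OF Rp k1 kN] by auto
  show "\<forall>a'\<in>{\<sigma> \<in> Av N (Pat \<union> append_max R). \<sigma> ! k = N}. gmap N k (Fmap N k a') = a'"
    using F_side[OF Rp k1 kN] by auto
  show "gmap N k ` (Av k (Pat \<union> R) \<times> Av (N - k) (Pat \<union> append_max R))
          \<subseteq> {\<sigma> \<in> Av N (Pat \<union> append_max R). \<sigma> ! k = N}"
    using g_side[OF Rp k1 kN] by auto
  show "Fmap N k ` {\<sigma> \<in> Av N (Pat \<union> append_max R). \<sigma> ! k = N}
          \<subseteq> Av k (Pat \<union> R) \<times> Av (N - k) (Pat \<union> append_max R)"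
    using F_side[OF Rp k1 kN] by blast
qed

lemma subseq_Cons_head_neq: "subseq (w # q) (N # \<beta>) \<Longrightarrow> w \<noteq> N \<Longrightarrow> subseq (w # q) \<beta>"
  by simp

lemma bij_0:
  assumes Rp: "\<forall>\<tau>\<in>R. is_perm \<tau>" and R0: "[] \<notin> R" and N1: "1 \<le> N"
  shows "bij_betw (\<lambda>\<beta>. N # \<beta>) (Av (N - 1) (Pat \<union> append_max R))
           {\<sigma> \<in> Av N (Pat \<union> append_max R). \<sigma> ! 0 = N}"
proof (rule bij_betw_byWitness[where f' = tl])
  show "\<forall>a\<in>Av (N - 1) (Pat \<union> append_max R). tl (N # a) = a" by simp
  show "\<forall>a'\<in>{\<sigma> \<in> Av N (Pat \<union> append_max R). \<sigma> ! 0 = N}. N # tl a' = a'"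
  proof
    fix \<sigma> assume s: "\<sigma> \<in> {\<sigma> \<in> Av N (Pat \<union> append_max R). \<sigma> ! 0 = N}"
    then have "length \<sigma> = N" using perms_length by (auto simp: Av_def)
    then have "\<sigma> \<noteq> []" using N1 by auto
    then show "N # tl \<sigma> = \<sigma>" using s by (cases \<sigma>) auto
  qed
  show "(\<lambda>\<beta>. N # \<beta>) ` Av (N - 1) (Pat \<union> append_max R)
          \<subseteq> {\<sigma> \<in> Av N (Pat \<union> append_max R). \<sigma> ! 0 = N}"
  proof
    fix \<sigma> assume "\<sigma> \<in> (\<lambda>\<beta>. N # \<beta>) ` Av (N - 1) (Pat \<union> append_max R)"
    then obtain \<beta> where \<sigma>: "\<sigma> = N # \<beta>" and \<beta>A: "\<beta> \<in> Av (N - 1) (Pat \<union> append_max R)" by blast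
    from \<beta>A have \<beta>p: "distinct \<beta>" "set \<beta> = {1..N - 1}" and \<beta>av: "avoids \<beta> (Pat \<union> append_max R)"
      by (auto simp: Av_alt perms_def)
    have NB: "N \<notin> set \<beta>" using \<beta>p N1 by auto
    have perm: "N # \<beta> \<in> perms N" using \<beta>p NB N1 by (auto simp: perms_def)
    have setN: "\<forall>x\<in>set (N # \<beta>). x \<le> N" using \<beta>p by auto
    have nP: "\<not> occP (N # \<beta>)"
    proof
      assume "occP (N # \<beta>)"
      then obtain w x y z where o: "subseq [w,x,y,z] (N # \<beta>)" "x \<noteq> w" "w < z" "x < z" "z < y"
        unfolding occP_def by blast
      have "z \<le> N" using subseq_set[OF o(1)] setN by auto
      then have "w \<noteq> N" using o by auto
      then have "subseq [w,x,y,z] \<beta>" using o(1) by simp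
      then have "occP \<beta>" using o unfolding occP_def
        by (intro exI[of _ w] exI[of _ x] exI[of _ y] exI[of _ z]) simp
      then show False using \<beta>av avoids_Pat avoids_Un by blast
    qed
    have nR: "\<not> occR R (N # \<beta>)"
    proof
      assume "occR R (N # \<beta>)"
      then obtain \<tau> q v where o: "\<tau> \<in> R" "subseq (q @ [v]) (N # \<beta>)" "order_iso q \<tau>"
        "\<forall>x\<in>set q. x < v"
        unfolding occR_def by blast
      have "q \<noteq> []" using o(1,3) R0 by (auto simp: order_iso_def)
      then obtain w q' where q: "q = w # q'" by (cases q) auto
      have "v \<le> N" using subseq_set[OF o(2)] setN by auto
      then have "w \<noteq> N" using o(4) q by auto
      then have "subseq (q @ [v]) \<beta>" using o(2) q by simp
      then have "occR R \<beta>" using o unfolding occR_def by blast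
      then show False using \<beta>av avoids_Rn[OF Rp] avoids_Un by blast
    qed
    have "avoids (N # \<beta>) (Pat \<union> append_max R)"
      using nP nR avoids_Pat avoids_Rn[OF Rp] avoids_Un by blast
    then show "\<sigma> \<in> {\<sigma> \<in> Av N (Pat \<union> append_max R). \<sigma> ! 0 = N}"
      using perm \<sigma> by (simp add: Av_alt)
  qed
  show "tl ` {\<sigma> \<in> Av N (Pat \<union> append_max R). \<sigma> ! 0 = N} \<subseteq> Av (N - 1) (Pat \<union> append_max R)"
  proof
    fix \<beta> assume "\<beta> \<in> tl ` {\<sigma> \<in> Av N (Pat \<union> append_max R). \<sigma> ! 0 = N}"
    then obtain \<sigma> where \<beta>: "\<beta> = tl \<sigma>" and s: "\<sigma> \<in> Av N (Pat \<union> append_max R)" "\<sigma> ! 0 = N"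
      by blast
    have "length \<sigma> = N" using s perms_length by (auto simp: Av_def)
    then have "\<sigma> \<noteq> []" using N1 by auto
    then have \<sigma>eq: "\<sigma> = N # \<beta>" using s(2) \<beta> by (cases \<sigma>) auto
    from s have \<sigma>p: "distinct \<sigma>" "set \<sigma> = {1..N}" and \<sigma>av: "avoids \<sigma> (Pat \<union> append_max R)"
      by (auto simp: Av_alt perms_def)
    have "distinct \<beta>" "N \<notin> set \<beta>" using \<sigma>p(1) \<sigma>eq by auto
    moreover have "insert N (set \<beta>) = {1..N}" using \<sigma>p(2) \<sigma>eq by simp
    ultimately have "set \<beta> = {1..N} - {N}" "distinct \<beta>" by (metis Diff_insert_absorb)+
    moreover have "{1..N} - {N} = {1..N - 1}" by auto
    ultimately have "\<beta> \<in> perms (N - 1)" unfolding perms_def by simp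
    moreover have "avoids \<beta> (Pat \<union> append_max R)"
    proof -
      have "subseq \<beta> (N # \<beta>)" using subseq_drop_many[of \<beta> \<beta> "[N]"] by simp
      then show ?thesis using avoids_subseq \<sigma>av \<sigma>eq by blast
    qed
    ultimately show "\<beta> \<in> Av (N - 1) (Pat \<union> append_max R)" by (simp add: Av_alt)
  qed
qed


lemma count_rec:
  assumes Rp: "\<forall>\<tau>\<in>R. is_perm \<tau>" and R0: "[] \<notin> R"
  shows "card (Av (Suc n) (Pat \<union> append_max R)) = card (Av n (Pat \<union> append_max R))
     + (\<Sum>i=1..n. card (Av i (Pat \<union> R)) * card (Av (Suc n - i) (Pat \<union> append_max R)))"
proof -
  define N where "N = Suc n"
  define S where "S k = {\<sigma> \<in> Av N (Pat \<union> append_max R). \<sigma> ! k = N}" for k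
  have cover: "Av N (Pat \<union> append_max R) = (\<Union>k\<in>{..<N}. S k)"
  proof
    show "Av N (Pat \<union> append_max R) \<subseteq> (\<Union>k\<in>{..<N}. S k)"
    proof
      fix \<sigma> assume \<sigma>: "\<sigma> \<in> Av N (Pat \<union> append_max R)"
      then have "N \<in> set \<sigma>" "length \<sigma> = N" using perms_length
        by (auto simp: Av_def perms_def N_def)
      then obtain k where "k < N" "\<sigma> ! k = N" by (auto simp: in_set_conv_nth)
      then show "\<sigma> \<in> (\<Union>k\<in>{..<N}. S k)" using \<sigma> by (auto simp: S_def)
    qed
    show "(\<Union>k\<in>{..<N}. S k) \<subseteq> Av N (Pat \<union> append_max R)" by (auto simp: S_def)
  qed
  have disj: "\<forall>i\<in>{..<N}. \<forall>j\<in>{..<N}. i \<noteq> j \<longrightarrow> S i \<inter> S j = {}"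
  proof (intro ballI impI)
    fix i j assume ij: "i \<in> {..<N}" "j \<in> {..<N}" "i \<noteq> j"
    show "S i \<inter> S j = {}"
    proof (rule ccontr)
      assume "S i \<inter> S j \<noteq> {}"
      then obtain \<sigma> where \<sigma>: "\<sigma> \<in> S i" "\<sigma> \<in> S j" by blast
      then have d: "distinct \<sigma>" "length \<sigma> = N" using perms_length
        by (auto simp: S_def Av_def perms_def)
      moreover have "\<sigma> ! i = \<sigma> ! j" using \<sigma> by (simp add: S_def)
      ultimately show False using ij nth_eq_iff_index_eq[OF d(1), of i j] by simp
    qed
  qed
  have fin: "\<forall>k\<in>{..<N}. finite (S k)" using finite_Av by (auto simp: S_def)
  have "card (Av N (Pat \<union> append_max R)) = (\<Sum>k<N. card (S k))"
    unfolding cover by (rule card_UN_disjoint[OF _ fin disj]) simp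
  also have "\<dots> = card (S 0) + (\<Sum>k<n. card (S (Suc k)))"
    unfolding N_def by (rule sum.lessThan_Suc_shift)
  also have "card (S 0) = card (Av n (Pat \<union> append_max R))"
    using bij_betw_same_card[OF bij_0[OF Rp R0, of N]] by (simp add: S_def N_def)
  also have "(\<Sum>k<n. card (S (Suc k)))
      = (\<Sum>k<n. card (Av (Suc k) (Pat \<union> R)) * card (Av (N - Suc k) (Pat \<union> append_max R)))"
  proof (rule sum.cong[OF refl])
    fix k assume "k \<in> {..<n}"
    then have kN: "Suc k < N" by (simp add: N_def)
    have k1: "1 \<le> Suc k" by simp
    have "card (S (Suc k)) = card (Av (Suc k) (Pat \<union> R) \<times> Av (N - Suc k) (Pat \<union> append_max R))"
      using bij_betw_same_card[OF bij_k[OF Rp k1 kN]] by (simp add: S_def)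
    then show "card (S (Suc k))
        = card (Av (Suc k) (Pat \<union> R)) * card (Av (N - Suc k) (Pat \<union> append_max R))"
      by (simp add: card_cartesian_product)
  qed
  also have "\<dots> = (\<Sum>i=1..n. card (Av i (Pat \<union> R)) * card (Av (Suc n - i) (Pat \<union> append_max R)))"
    using sum.atLeast1_atMost_eq[of "\<lambda>i. card (Av i (Pat \<union> R)) * card (Av (Suc n - i) (Pat \<union> append_max R))" n]
    by (simp add: N_def)
  finally show ?thesis by (simp add: N_def)
qed

lemma contains_Nil: "contains \<sigma> []"
  unfolding contains_def by (intro exI[of _ "{}"]) (simp add: order_iso_def)

lemma contains_Nil_left: "contains [] p \<Longrightarrow> p = []"
  unfolding contains_def order_iso_def by auto

lemma perms_0: "perms 0 = {[]}"
  by (auto simp: perms_def)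

theorem mainTheorem6:
  fixes R :: "nat list set" and f g :: "'a::field_char_0 fps"
  assumes "R \<noteq> {}"
    and "\<forall>\<sigma>\<in>R. is_perm \<sigma>"
    and "fps_nth g 0 \<noteq> 0"
    and "Av_gf ({[1,2,4,3], [2,1,4,3]} \<union> R) = 1 + fps_X * f / g"
  shows "Av_gf ({[1,2,4,3], [2,1,4,3]} \<union> append_max R)
           = 1 + fps_X * g / ((1 - fps_X) * g - fps_X * f)"
proof -
  define a where "a n = card (Av n (Pat \<union> R))" for n
  define b where "b n = card (Av n (Pat \<union> append_max R))" for n
  have hA: "Abs_fps (\<lambda>n. of_nat (a n)) = 1 + fps_X * f / g"
    using assms(4) by (simp add: Av_gf_def a_def Pat_def)
  have "fps_nth (fps_X * f / g) 0 = 0" using assms(3) by (simp add: fps_divide_unit)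
  then have "(of_nat (a 0) :: 'a) = 1"
    using arg_cong[OF hA, of "\<lambda>F. fps_nth F 0"] by simp
  then have a0: "a 0 = 1" by simp
  have R0: "[] \<notin> R"
  proof
    assume "[] \<in> R"
    then have "Av 0 (Pat \<union> R) = {}" using contains_Nil by (auto simp: Av_def)
    then show False using a0 by (simp add: a_def)
  qed
  have "Av 0 (Pat \<union> append_max R) = {[]}"
  proof -
    have "[] \<notin> Pat \<union> append_max R" by (auto simp: Pat_def append_max_def)
    then have "\<forall>p\<in>Pat \<union> append_max R. \<not> contains [] p" using contains_Nil_left by blast
    then show ?thesis by (auto simp: Av_def perms_0)
  qed
  then have b0: "b 0 = 1" by (simp add: b_def)
  have rec: "\<And>n. b (Suc n) = b n + (\<Sum>i=1..n. a i * b (Suc n - i))"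
    using count_rec[OF assms(2) R0] by (simp add: a_def b_def)
  have "Abs_fps (\<lambda>n. (of_nat (b n) :: 'a)) = 1 + fps_X * g / ((1 - fps_X) * g - fps_X * f)"
    by (rule fps_part[OF a0 b0 rec assms(3) hA])
  then show ?thesis by (simp add: Av_gf_def b_def Pat_def)
qed

end
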